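(* Let $n$ be a positive integer and $p$ an odd prime. Let $S \subseteq \mathbb{Z}_n$ with $0 \notin S$, $S = -S$, $|S| = p-1$, such that the circulant graph $\mathrm{Cay}(\mathbb{Z}_n, S)$ is connected. Then $\mathrm{Cay}(\mathbb{Z}_n, S)$ admits a perfect code if and only if $p$ divides $n$ and $s \not\equiv s' \pmod p$ for all distinct $s, s' \in S \cup \{0\}$.
   Context: $\mathbb{Z}_n$ is the additive group of integers modulo $n$; elements are identified with integers in $\{0,1,\dots,n-1\}$ when reducing modulo $p$. For an inverse-closed subset $S$ of $\mathbb{Z}_n$ not containing $0$, the circulant graph $\mathrm{Cay}(\mathbb{Z}_n,S)$ has vertex set $\mathbb{Z}_n$, with $u,v$ adjacent iff $v-u \in S$; its degree is $|S|$. A perfect code in a graph $\Gamma=(V,E)$ is a subset $C \subseteq V$ that is an independent set such that every vertex of $V\setminus C$ is adjacent to exactly one vertex of $C$ (equivalently, the closed neighbourhoods of vertices of $C$ partition $V$). *)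

theory Defs
  imports "HOL-Computational_Algebra.Primes"
begin

text \<open>Z_n is modelled by the representatives {0..<n} (as naturals); arithmetic is mod n.\<close>

definition circ_adj :: "nat \<Rightarrow> nat set \<Rightarrow> nat \<Rightarrow> nat \<Rightarrow> bool" where
  "circ_adj n S u v \<longleftrightarrow> nat ((int v - int u) mod int n) \<in> S"

definition inverse_closed :: "nat \<Rightarrow> nat set \<Rightarrow> bool" where
  "inverse_closed n S \<longleftrightarrow> (\<forall>s\<in>S. (n - s) mod n \<in> S)"

definition circ_edges :: "nat \<Rightarrow> nat set \<Rightarrow> (nat \<times> nat) set" where
  "circ_edges n S = {(u, v). u < n \<and> v < n \<and> circ_adj n S u v}"

definition circ_connected :: "nat \<Rightarrow> nat set \<Rightarrow> bool" where
  "circ_connected n S \<longleftrightarrow> (\<forall>u<n. \<forall>v<n. (u, v) \<in> (circ_edges n S)\<^sup>*)"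

definition is_perfect_code :: "nat \<Rightarrow> nat set \<Rightarrow> nat set \<Rightarrow> bool" where
  "is_perfect_code n S C \<longleftrightarrow>
     C \<subseteq> {0..<n} \<and>
     (\<forall>c\<in>C. \<forall>c'\<in>C. \<not> circ_adj n S c c') \<and>
     (\<forall>v\<in>{0..<n} - C. card {c\<in>C. circ_adj n S v c} = 1)"

definition has_perfect_code :: "nat \<Rightarrow> nat set \<Rightarrow> bool" where
  "has_perfect_code n S \<longleftrightarrow> (\<exists>C. is_perfect_code n S C)"

end

theory Submission
  imports Defs "HOL-Computational_Algebra.Polynomial"
begin


definition phi :: "nat \<Rightarrow> int poly \<Rightarrow> nat \<Rightarrow> int" where
  "phi n P g = (\<Sum>k\<le>degree P. if k mod n = g then coeff P k else 0)"

lemma phi_big: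
  assumes "degree P \<le> N"
  shows "phi n P g = (\<Sum>k\<le>N. if k mod n = g then coeff P k else 0)"
  unfolding phi_def
  by (rule sum.mono_neutral_left) (use assms in \<open>auto simp: coeff_eq_0\<close>)

lemma phi_add: "phi n (P + Q) g = phi n P g + phi n Q g"
proof -
  let ?N = "max (degree P) (degree Q)"
  have "degree (P + Q) \<le> ?N" by (rule degree_add_le) auto
  then show ?thesis
    using phi_big[of P ?N n g] phi_big[of Q ?N n g] phi_big[of "P+Q" ?N n g]
    by (simp add: sum.distrib[symmetric]) (intro sum.cong, auto)
qed

lemma phi_zero: "phi n 0 g = 0" unfolding phi_def by (intro sum.neutral) auto

lemma phi_smult: "phi n (smult c P) g = c * phi n P g"
proof -
  have "phi n (smult c P) g = (\<Sum>k\<le>degree P. if k mod n = g then coeff (smult c P) k else 0)"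
    by (rule phi_big) (simp add: degree_smult_le)
  also have "\<dots> = c * phi n P g" unfolding phi_def sum_distrib_left by (intro sum.cong) auto
  finally show ?thesis .
qed

lemma phi_sum: "finite I \<Longrightarrow> phi n (\<Sum>i\<in>I. f i) g = (\<Sum>i\<in>I. phi n (f i) g)"
  by (induction I rule: finite_induct) (auto simp: phi_zero phi_add)

lemma phi_monom: "phi n (monom c k) g = (if k mod n = g then c else 0)"
proof -
  have "phi n (monom c k) g = (\<Sum>ka\<le>k. if ka mod n = g then coeff (monom c k) ka else 0)"
    by (rule phi_big) (simp add: degree_monom_le)
  also have "\<dots> = (\<Sum>ka\<le>k. if ka = k then (if k mod n = g then c else 0) else 0)"
    by (intro sum.cong) auto
  also have "\<dots> = (if k mod n = g then c else 0)" by (simp add: sum.delta)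
  finally show ?thesis .
qed

lemma monom_mult_expand: "monom 1 j * (Q::int poly) = (\<Sum>i\<le>degree Q. monom (coeff Q i) (j + i))"
proof -
  have "monom 1 j * Q = monom 1 j * (\<Sum>i\<le>degree Q. monom (coeff Q i) i)"
    by (simp add: poly_as_sum_of_monoms)
  also have "\<dots> = (\<Sum>i\<le>degree Q. monom (coeff Q i) (j + i))"
    unfolding sum_distrib_left mult_monom by simp
  finally show ?thesis .
qed

lemma phi_monom_mult: "phi n (monom 1 j * Q) g = (\<Sum>i\<le>degree Q. if (j + i) mod n = g then coeff Q i else 0)"
  by (simp add: monom_mult_expand phi_sum phi_monom)

lemma mod_add_lt: "a < n \<Longrightarrow> b < (n::nat) \<Longrightarrow> (a + b) mod n = (if a + b < n then a + b else a + b - n)"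
  by (simp add: le_mod_geq)

lemma mod_shift_aux:
  assumes "a < (n::nat)" "b < n" "g < n"
  shows "(a + b) mod n = g \<longleftrightarrow> b = (g + n - a) mod n"
proof -
  have "(g + n - a) mod n = (if g + n - a < n then g + n - a else g - a)"
    using assms by (simp add: le_mod_geq)
  then show ?thesis using assms mod_add_lt[OF assms(1,2)] by auto
qed

lemma mod_shift_iff:
  assumes "g < (n::nat)"
  shows "(j + i) mod n = g \<longleftrightarrow> i mod n = (g + n - j mod n) mod n"
proof -
  have n: "n > 0" using assms by simp
  have a: "j mod n < n" "i mod n < n" using n by auto
  have "(j + i) mod n = (j mod n + i mod n) mod n" by (simp add: mod_add_eq)
  moreover have "(g + n - j mod n) mod n = (if g + n - j mod n < n then g + n - j mod n else g - j mod n)"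
    using a assms by (simp add: le_mod_geq)
  ultimately show ?thesis using mod_shift_aux[OF a assms] by simp
qed

lemma phi_mult_const:
  assumes "n > 0" and Q: "\<And>g. g < n \<Longrightarrow> phi n Q g = \<kappa>" and g: "g < n"
  shows "phi n (P * Q) g = poly P 1 * \<kappa>"
proof -
  have sh: "phi n (monom 1 j * Q) g = \<kappa>" for j
  proof -
    have "phi n (monom 1 j * Q) g = phi n Q ((g + n - j mod n) mod n)"
      unfolding phi_monom_mult by (simp add: phi_def mod_shift_iff[OF g])
    also have "\<dots> = \<kappa>" using Q assms(1) by simp
    finally show ?thesis .
  qed
  have "P * Q = (\<Sum>j\<le>degree P. monom (coeff P j) j) * Q" by (simp add: poly_as_sum_of_monoms)
  also have "\<dots> = (\<Sum>j\<le>degree P. smult (coeff P j) (monom 1 j * Q))"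
    by (simp add: sum_distrib_right smult_monom_mult)
  finally have "phi n (P * Q) g = (\<Sum>j\<le>degree P. coeff P j * \<kappa>)"
    by (simp add: phi_sum phi_smult sh)
  also have "\<dots> = poly P 1 * \<kappa>" by (simp add: poly_altdef sum_distrib_right)
  finally show ?thesis .
qed


lemma adj_nat:
  assumes "u < n"
  shows "circ_adj n S u v \<longleftrightarrow> (v + n - u) mod n \<in> S"
proof -
  have "int ((v + n - u) mod n) = (int v - int u) mod int n"
  proof -
    have "int ((v + n - u) mod n) = int (v + n - u) mod int n" by (simp add: zmod_int)
    also have "int (v + n - u) = (int v - int u) + int n" using assms by simp
    also have "(int v - int u + int n) mod int n = (int v - int u) mod int n" by simp
    finally show ?thesis .
  qed
  then have "nat ((int v - int u) mod int n) = (v + n - u) mod n" by (metis nat_int)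
  then show ?thesis unfolding circ_adj_def by simp
qed

lemma mod_n_sub: "n \<le> x \<Longrightarrow> x < 2 * n \<Longrightarrow> x mod (n::nat) = x - n"
  by (simp add: le_mod_geq)

lemma dist_sym:
  assumes "u < n" "v < (n::nat)"
  shows "(n - (v + n - u) mod n) mod n = (u + n - v) mod n"
proof -
  consider "u = v" | "u < v" | "v < u" by linarith
  then show ?thesis
  proof cases
    case 1 then show ?thesis by simp
  next
    case 2
    have "(v + n - u) mod n = v - u" using 2 assms mod_n_sub[of n "v + n - u"] by simp
    moreover have "(u + n - v) mod n = u + n - v" using 2 assms by simp
    ultimately show ?thesis using 2 assms by simp
  next
    case 3
    have "(v + n - u) mod n = v + n - u" using 3 assms by simp
    moreover have "(u + n - v) mod n = u - v" using 3 assms mod_n_sub[of n "u + n - v"] by simp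
    moreover have "n - (v + n - u) = u - v" using 3 assms by simp
    ultimately show ?thesis using 3 assms by simp
  qed
qed

lemma adj_sym:
  assumes "inverse_closed n S" "u < n" "v < n" "circ_adj n S u v"
  shows "circ_adj n S v u"
  using assms dist_sym[of u n v] unfolding inverse_closed_def adj_nat[OF assms(2)] adj_nat[OF assms(3)]
  by metis

lemma sum_indicator_card: "finite A \<Longrightarrow> (\<Sum>x\<in>A. if P x then (1::int) else 0) = int (card {x\<in>A. P x})"
  by (simp add: sum.inter_filter[symmetric])


lemma zero_dist: "c < n \<Longrightarrow> g < (n::nat) \<Longrightarrow> (g + n - c) mod n = 0 \<Longrightarrow> c = g"
  using mod_shift_aux[of c n 0 g] by simp

lemma fiber_card:
  assumes "n > 0" "S \<subseteq> {0..<n}" "0 \<notin> S" "inverse_closed n S" "is_perfect_code n S C" "g < n"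
  shows "card {(t,c). t \<in> insert 0 S \<and> c \<in> C \<and> (t + c) mod n = g} = 1"
proof -
  let ?T = "insert 0 S"
  have C: "C \<subseteq> {0..<n}" and ind: "\<And>c c'. c \<in> C \<Longrightarrow> c' \<in> C \<Longrightarrow> \<not> circ_adj n S c c'"
    and out: "\<And>v. v < n \<Longrightarrow> v \<notin> C \<Longrightarrow> card {c\<in>C. circ_adj n S v c} = 1"
    using assms(5) unfolding is_perfect_code_def by auto
  let ?F = "{c\<in>C. (g + n - c) mod n \<in> ?T}"
  have F: "card ?F = 1"
  proof (cases "g \<in> C")
    case True
    have "?F = {g}"
    proof (intro equalityI subsetI)
      fix c assume c: "c \<in> ?F"
      then have cn: "c < n" using C by auto
      show "c \<in> {g}"
      proof (rule ccontr)
        assume "c \<notin> {g}"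
        then have "(g + n - c) mod n \<noteq> 0" using zero_dist[OF cn assms(6)] by auto
        then have "(g + n - c) mod n \<in> S" using c by auto
        then have "circ_adj n S c g" using adj_nat[OF cn] by simp
        then show False using ind c True by auto
      qed
    qed (use True in auto)
    then show ?thesis by simp
  next
    case False
    have "?F = {c\<in>C. circ_adj n S g c}"
    proof (intro Collect_cong conj_cong refl)
      fix c assume c: "c \<in> C"
      then have cn: "c < n" using C by auto
      have ne: "(g + n - c) mod n \<noteq> 0" using zero_dist[OF cn assms(6)] c False by auto
      have "(g + n - c) mod n \<in> ?T \<longleftrightarrow> circ_adj n S c g" using ne adj_nat[OF cn] by simp
      also have "\<dots> \<longleftrightarrow> circ_adj n S g c" using adj_sym[OF assms(4)] cn assms(6) by blast
      finally show "(g + n - c) mod n \<in> ?T \<longleftrightarrow> circ_adj n S g c" .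
    qed
    then show ?thesis using out[OF assms(6) False] by simp
  qed
  have eq: "{(t,c). t \<in> ?T \<and> c \<in> C \<and> (t + c) mod n = g} = (\<lambda>c. ((g + n - c) mod n, c)) ` ?F"
  proof (intro equalityI subsetI)
    fix x assume "x \<in> {(t,c). t \<in> ?T \<and> c \<in> C \<and> (t + c) mod n = g}"
    then obtain t c where x: "x = (t,c)" "t \<in> ?T" "c \<in> C" "(t + c) mod n = g" by blast
    have "t < n" "c < n" using x assms(1,2) C by auto
    then have "t = (g + n - c) mod n" using mod_shift_aux[of c n t g] x assms(6) by (simp add: add.commute)
    then show "x \<in> (\<lambda>c. ((g + n - c) mod n, c)) ` ?F" using x by auto
  next
    fix x assume "x \<in> (\<lambda>c. ((g + n - c) mod n, c)) ` ?F"
    then obtain c where x: "x = ((g + n - c) mod n, c)" "c \<in> ?F" by (rule imageE)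
    have "c < n" using x C by auto
    then have "((g + n - c) mod n + c) mod n = g" using mod_shift_aux[of c n "(g + n - c) mod n" g] assms(6)
      by (simp add: add.commute)
    then show "x \<in> {(t,c). t \<in> ?T \<and> c \<in> C \<and> (t + c) mod n = g}" using x by auto
  qed
  have "inj_on (\<lambda>c. ((g + n - c) mod n, c)) ?F" by (auto intro: inj_onI)
  then have "card ((\<lambda>c. ((g + n - c) mod n, c)) ` ?F) = 1" using F by (simp add: card_image)
  then show ?thesis using eq by simp
qed


lemma frob2:
  fixes a b :: "'a::comm_ring_1"
  assumes "prime p"
  shows "\<exists>r. (a + b)^p = a^p + b^p + of_nat p * r"
proof -
  have p1: "p > 1" using assms prime_gt_1_nat by blast
  have "{..p} = insert 0 (insert p {1..<p})" using p1 by auto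
  then have "(a + b)^p = (\<Sum>k\<in>insert 0 (insert p {1..<p}). of_nat (p choose k) * a^k * b^(p-k))"
    by (simp add: binomial_ring)
  also have "\<dots> = b^p + a^p + (\<Sum>k\<in>{1..<p}. of_nat (p choose k) * a^k * b^(p-k))"
    using p1 by simp
  also have "(\<Sum>k\<in>{1..<p}. of_nat (p choose k) * a^k * b^(p-k)) = of_nat p * (\<Sum>k\<in>{1..<p}. of_nat ((p choose k) div p) * a^k * b^(p-k))"
    unfolding sum_distrib_left
  proof (rule sum.cong)
    fix k assume "k \<in> {1..<p}"
    then have "p dvd (p choose k)" using dvd_choose_prime[of k p] assms by auto
    then have "(p choose k) = p * ((p choose k) div p)" by simp
    then have "(of_nat (p choose k) :: 'a) = of_nat p * of_nat ((p choose k) div p)"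
      by (metis of_nat_mult)
    then show "of_nat (p choose k) * a^k * b^(p-k) = of_nat p * (of_nat ((p choose k) div p) * a^k * b^(p-k))"
      by (simp add: mult.assoc)
  qed simp
  finally show ?thesis by (metis add.commute)
qed

lemma frob_sum:
  fixes f :: "'b \<Rightarrow> 'a::comm_ring_1"
  assumes "prime p" and "finite I"
  shows "\<exists>r. (\<Sum>i\<in>I. f i)^p = (\<Sum>i\<in>I. f i ^ p) + of_nat p * r"
  using assms(2)
proof (induction I rule: finite_induct)
  case empty
  then show ?case using assms(1) prime_gt_0_nat by (intro exI[of _ 0]) (simp add: power_0_left)
next
  case (insert x F)
  then obtain r where r: "(\<Sum>i\<in>F. f i)^p = (\<Sum>i\<in>F. f i ^ p) + of_nat p * r" by blast
  obtain r2 where r2: "(f x + (\<Sum>i\<in>F. f i))^p = f x ^ p + (\<Sum>i\<in>F. f i)^p + of_nat p * r2"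
    using frob2[OF assms(1)] by blast
  show ?case using insert r r2 by (intro exI[of _ "r + r2"]) (simp add: algebra_simps)
qed

lemma frob_sum_monom:
  assumes "prime p" "finite T"
  shows "\<exists>r. (\<Sum>t\<in>T. monom (1::int) t)^p = (\<Sum>t\<in>T. monom 1 (t * p)) + of_nat p * r"
  using frob_sum[OF assms, of "\<lambda>t. monom (1::int) t"] by (simp add: monom_power)

lemma prod_monoms:
  "(\<Sum>t\<in>T. monom (1::int) (e t)) * (\<Sum>c\<in>C. monom 1 c) = (\<Sum>t\<in>T. \<Sum>c\<in>C. monom 1 (e t + c))"
  by (simp add: sum_distrib_left sum_distrib_right mult_monom) (rule sum.swap)

lemma phi_pairs:
  assumes "finite T" "finite C"
  shows "phi n (\<Sum>t\<in>T. \<Sum>c\<in>C. monom 1 (e t + c)) g = int (card {(t,c). t \<in> T \<and> c \<in> C \<and> (e t + c) mod n = g})"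
proof -
  have "phi n (\<Sum>t\<in>T. \<Sum>c\<in>C. monom 1 (e t + c)) g = (\<Sum>t\<in>T. \<Sum>c\<in>C. if (e t + c) mod n = g then 1 else 0)"
    using assms by (simp add: phi_sum phi_monom)
  also have "\<dots> = (\<Sum>x\<in>T \<times> C. if (e (fst x) + snd x) mod n = g then 1 else 0)"
    by (simp add: sum.cartesian_product case_prod_beta)
  also have "\<dots> = int (card {x\<in>T \<times> C. (e (fst x) + snd x) mod n = g})"
    using assms by (simp add: sum_indicator_card)
  also have "{x\<in>T \<times> C. (e (fst x) + snd x) mod n = g} = {(t,c). t \<in> T \<and> c \<in> C \<and> (e t + c) mod n = g}"
    by auto
  finally show ?thesis .
qed


lemma add_mod_lcancel:
  assumes h: "(a + b) mod m = (a + c) mod (m::nat)"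
  shows "b mod m = c mod m"
proof -
  have "(int a + int b) mod int m = (int a + int c) mod int m" using h by (metis of_nat_add zmod_int)
  then have "(int a + int b - int a) mod int m = (int a + int c - int a) mod int m" by (rule mod_diff_cong) simp
  then have "int b mod int m = int c mod int m" by simp
  then show ?thesis by (metis of_nat_eq_iff zmod_int)
qed

lemma necessity:
  assumes n0: "n > 0" and pr: "prime p" and odd: "odd p"
    and Sn: "S \<subseteq> {0..<n}" and S0: "0 \<notin> S" and ic: "inverse_closed n S"
    and cardS: "card S = p - 1"
    and conn: "circ_connected n S" and pc: "is_perfect_code n S C"
  shows "p dvd n \<and> (\<forall>s\<in>S \<union> {0}. \<forall>s'\<in>S \<union> {0}. s \<noteq> s' \<longrightarrow> s mod p \<noteq> s' mod p)"
proof -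
  define T where "T = insert 0 S"
  have p2: "p \<ge> 2" using pr prime_ge_2_nat by blast
  have finS: "finite S" using Sn finite_subset by blast
  have finT: "finite T" using finS T_def by simp
  have cardT: "card T = p" using finS S0 cardS p2 T_def by simp
  have Tn: "T \<subseteq> {0..<n}" using Sn n0 T_def by auto
  have C: "C \<subseteq> {0..<n}" using pc unfolding is_perfect_code_def by blast
  have finC: "finite C" using C finite_subset by blast
  define fib where "fib g = {(t,c). t \<in> T \<and> c \<in> C \<and> (t + c) mod n = g}" for g
  have fib1: "card (fib g) = 1" if "g < n" for g
    using fiber_card[OF n0 Sn S0 ic pc that] unfolding fib_def T_def .
  have uniq: "t1 = t2 \<and> c1 = c2" if H: "t1 \<in> T" "t2 \<in> T" "c1 \<in> C" "c2 \<in> C"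
     "(t1 + c1) mod n = (t2 + c2) mod n" for t1 t2 c1 c2
  proof -
    let ?g = "(t1 + c1) mod n"
    have "?g < n" using n0 by simp
    then obtain x where "fib ?g = {x}" using fib1 card_1_singletonE by blast
    moreover have "(t1,c1) \<in> fib ?g" "(t2,c2) \<in> fib ?g" using H unfolding fib_def by auto
    ultimately show ?thesis by auto
  qed
  have ex: "\<exists>t\<in>T. \<exists>c\<in>C. (t + c) mod n = g" if gn: "g < n" for g
  proof -
    obtain x where "fib g = {x}" using fib1[OF gn] card_1_singletonE by blast
    then have "x \<in> fib g" by simp
    then show ?thesis unfolding fib_def by auto
  qed
  have bij: "bij_betw (\<lambda>(t,c). (t + c) mod n) (T \<times> C) {0..<n}"
    unfolding bij_betw_def
  proof
    show "inj_on (\<lambda>(t,c). (t + c) mod n) (T \<times> C)"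
      by (rule inj_onI) (use uniq in auto)
    show "(\<lambda>(t,c). (t + c) mod n) ` (T \<times> C) = {0..<n}"
    proof (intro equalityI subsetI)
      fix g assume "g \<in> {0..<n}"
      then obtain t c where "t \<in> T" "c \<in> C" "(t + c) mod n = g" using ex by force
      then show "g \<in> (\<lambda>(t,c). (t + c) mod n) ` (T \<times> C)" by force
    qed (use n0 in auto)
  qed
  have "n = p * card C" using bij_betw_same_card[OF bij] cardT by (simp add: card_cartesian_product)
  then have pn: "p dvd n" by simp
  define A :: "int poly" where "A = (\<Sum>t\<in>T. monom 1 t)"
  define Cp :: "int poly" where "Cp = (\<Sum>c\<in>C. monom 1 c)"
  define B :: "int poly" where "B = (\<Sum>t\<in>T. monom 1 (t * p))"
  obtain r where r: "A^p = B + of_nat p * r"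
    using frob_sum_monom[OF pr finT] unfolding A_def B_def by blast
  have AC: "A * Cp = (\<Sum>t\<in>T. \<Sum>c\<in>C. monom 1 (t + c))"
    unfolding A_def Cp_def using prod_monoms[where e="\<lambda>t. t" and T=T and C=C] by simp
  have BC: "B * Cp = (\<Sum>t\<in>T. \<Sum>c\<in>C. monom 1 (t * p + c))"
    unfolding B_def Cp_def using prod_monoms[where e="\<lambda>t. t * p" and T=T and C=C] by simp
  have phiAC: "phi n (A * Cp) g = 1" if "g < n" for g
    using phi_pairs[OF finT finC, where e="\<lambda>t. t" and n=n and g=g] fib1[OF that] unfolding AC fib_def by simp
  have polyA: "poly A 1 = int p" unfolding A_def by (simp add: poly_sum poly_monom cardT)
  have phiApC: "phi n (A^p * Cp) g = int p ^ (p - 1)" if "g < n" for g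
  proof -
    have pS: "p = Suc (p - 1)" using p2 by simp
    have eq: "A^p * Cp = A^(p-1) * (A * Cp)"
      by (subst pS) (simp only: power_Suc2 diff_Suc_1 mult.assoc)
    have "phi n (A^(p-1) * (A * Cp)) g = poly (A^(p-1)) 1 * 1"
      by (rule phi_mult_const[OF n0 phiAC that])
    then show ?thesis unfolding eq by (simp add: poly_power polyA)
  qed
  define K where "K g = {(t,c). t \<in> T \<and> c \<in> C \<and> (t * p + c) mod n = g}" for g
  have Kdvd: "p dvd card (K g)" if "g < n" for g
  proof -
    have "A^p * Cp = B * Cp + smult (of_nat p) (r * Cp)" using r
      by (simp only: distrib_right mult.assoc of_nat_mult_conv_smult mult_smult_left)
    then have "phi n (A^p * Cp) g = phi n (B * Cp) g + of_nat p * phi n (r * Cp) g"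
      by (simp add: phi_add phi_smult)
    moreover have "phi n (B * Cp) g = int (card (K g))"
      using phi_pairs[OF finT finC, where e="\<lambda>t. t * p" and n=n and g=g] unfolding BC K_def by simp
    ultimately have "int (card (K g)) = int p * (int p ^ (p - 2) - phi n (r * Cp) g)"
      using phiApC[OF that] p2
      by (simp add: algebra_simps power_Suc[symmetric] Suc_diff_Suc numeral_2_eq_2)
    then have "int p dvd int (card (K g))" by simp
    then show ?thesis by simp
  qed
  define Good where "Good x \<longleftrightarrow> (\<forall>c0\<in>C. \<exists>c\<in>C. (x * p + c) mod n = c0)" for x
  have goodT: "Good t" if "t \<in> T" for t
  proof -
    have "\<exists>c\<in>C. (t * p + c) mod n = c0" if c0: "c0 \<in> C" for c0
    proof -
      have c0n: "c0 < n" using c0 C by auto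
      have fin: "finite (K c0)" unfolding K_def
        by (rule finite_subset[of _ "T \<times> C"]) (use finT finC in auto)
      have inj: "inj_on fst (K c0)"
      proof (rule inj_onI)
        fix x y assume "x \<in> K c0" "y \<in> K c0" "fst x = fst y"
        then obtain t c c' where xy: "x = (t,c)" "y = (t,c')" "c \<in> C" "c' \<in> C"
          "(t * p + c) mod n = c0" "(t * p + c') mod n = c0" unfolding K_def by auto
        then have "c mod n = c' mod n" using add_mod_lcancel by metis
        moreover have "c < n" "c' < n" using xy C by auto
        ultimately have "c = c'" by simp
        then show "x = y" using xy by simp
      qed
      have "(0, c0) \<in> K c0" using c0 c0n unfolding K_def T_def by auto
      then have pos: "card (K c0) > 0" using fin card_gt_0_iff by blast
      have sub: "fst ` K c0 \<subseteq> T" unfolding K_def by auto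
      have "card (K c0) \<le> p" using card_mono[OF finT sub] card_image[OF inj] cardT by simp
      with pos Kdvd[OF c0n] have "card (K c0) = p" using dvd_imp_le le_antisym by blast
      then have "fst ` K c0 = T" using card_subset_eq[OF finT sub] card_image[OF inj] cardT by simp
      then obtain x where "x \<in> K c0" "fst x = t" using \<open>t \<in> T\<close> by force
      then show ?thesis unfolding K_def by auto
    qed
    then show ?thesis unfolding Good_def by blast
  qed
  have good_add: "Good (x + y)" if gx: "Good x" and gy: "Good y" for x y
    unfolding Good_def
  proof
    fix c0 assume "c0 \<in> C"
    then obtain c1 where c1: "c1 \<in> C" "(x * p + c1) mod n = c0" using gx unfolding Good_def by blast
    then obtain c2 where c2: "c2 \<in> C" "(y * p + c2) mod n = c1" using gy unfolding Good_def by blast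
    have "((x + y) * p + c2) mod n = (x * p + (y * p + c2) mod n) mod n"
      by (simp add: mod_add_right_eq algebra_simps)
    then show "\<exists>c\<in>C. ((x + y) * p + c) mod n = c0" using c1 c2 by auto
  qed
  have good_mod: "Good y" if gx: "Good x" and xy: "x mod n = y mod n" for x y
    unfolding Good_def
  proof
    fix c0 assume "c0 \<in> C"
    then obtain c where c: "c \<in> C" "(x * p + c) mod n = c0" using gx unfolding Good_def by blast
    have "(y * p + c) mod n = (x * p + c) mod n"
      by (metis mod_add_left_eq mod_mult_left_eq xy)
    then show "\<exists>c\<in>C. (y * p + c) mod n = c0" using c by auto
  qed
  have reach: "\<exists>x. Good x \<and> x mod n = v" if "(u, v) \<in> (circ_edges n S)\<^sup>*" "u = 0" for u v
    using that
  proof (induction rule: rtrancl_induct)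
    case base
    have "Good 0" unfolding Good_def
    proof
      fix c0 assume c0: "c0 \<in> C"
      then have "c0 < n" using C by auto
      then show "\<exists>c\<in>C. (0 * p + c) mod n = c0" using c0 by (intro bexI[of _ c0]) simp_all
    qed
    then show ?case using base by auto
  next
    case (step y z)
    then obtain x where x: "Good x" "x mod n = y" by blast
    have yz: "y < n" "z < n" "circ_adj n S y z" using step(2) unfolding circ_edges_def by auto
    define s where "s = (z + n - y) mod n"
    have sS: "s \<in> S" using yz adj_nat s_def by simp
    have "s < n" using sS Sn by auto
    then have "(y + s) mod n = z" using mod_shift_aux[of y n s z] yz s_def by simp
    moreover have "(x + s) mod n = (y + s) mod n" using x(2) by (metis mod_add_left_eq)
    moreover have "Good (x + s)" using good_add[OF x(1) goodT] sS T_def by simp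
    ultimately show ?case by metis
  qed
  have goodall: "Good x" for x
  proof -
    have "(0, x mod n) \<in> (circ_edges n S)\<^sup>*" using conn n0 unfolding circ_connected_def by simp
    then obtain y where "Good y" "y mod n = x mod n" using reach by blast
    then show ?thesis using good_mod by blast
  qed
  have distinct: "s mod p \<noteq> s' mod p" if sT: "s \<in> T" and s'T: "s' \<in> T" and lt: "s < s'" for s s'
  proof
    assume eq: "s mod p = s' mod p"
    then have "p dvd s' - s" using lt mod_eq_dvd_iff_nat[of s s' p] by simp
    then obtain k where k: "s' = s + p * k" using lt
      by (metis dvdE le_add_diff_inverse less_imp_le)
    obtain t0 c0 where c0: "c0 \<in> C" using ex[OF n0] by blast
    obtain c where c: "c \<in> C" "(k * (n - 1) * p + c) mod n = c0"
      using goodall[of "k * (n - 1)"] c0 unfolding Good_def by blast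
    have "(s' + c0) mod n = (s' + (k * (n - 1) * p + c)) mod n" using c(2) by (metis mod_add_right_eq)
    also have "s' + (k * (n - 1) * p + c) = (s + c) + n * (k * p)"
    proof -
      have "p * k + k * (n - 1) * p = n * (k * p)" using n0
        by (metis (no_types, lifting) Suc_diff_1 add.commute mult.commute mult.left_commute mult_Suc_right)
      then show ?thesis using k by simp
    qed
    also have "((s + c) + n * (k * p)) mod n = (s + c) mod n" by simp
    finally have "(s' + c0) mod n = (s + c) mod n" .
    then have "s' = s" using uniq[OF s'T sT c0 c(1)] by blast
    then show False using lt by simp
  qed
  have "\<forall>s\<in>S \<union> {0}. \<forall>s'\<in>S \<union> {0}. s \<noteq> s' \<longrightarrow> s mod p \<noteq> s' mod p"
  proof (intro ballI impI)
    fix s s' assume "s \<in> S \<union> {0}" "s' \<in> S \<union> {0}" "s \<noteq> s'"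
    then have "s \<in> T" "s' \<in> T" "s < s' \<or> s' < s" using T_def by auto
    then show "s mod p \<noteq> s' mod p" using distinct by metis
  qed
  with pn show ?thesis by blast
qed


lemma sufficiency:
  assumes n0: "n > 0" and pr: "prime p"
    and Sn: "S \<subseteq> {0..<n}" and S0: "0 \<notin> S"
    and cardS: "card S = p - 1" and pn: "p dvd n"
    and dist: "\<forall>s\<in>S \<union> {0}. \<forall>s'\<in>S \<union> {0}. s \<noteq> s' \<longrightarrow> s mod p \<noteq> s' mod p"
  shows "is_perfect_code n S {c. c < n \<and> p dvd c}"
proof -
  define T where "T = insert 0 S"
  define C where "C = {c. c < n \<and> p dvd c}"
  have p2: "p \<ge> 2" using pr prime_ge_2_nat by blast
  have finS: "finite S" using Sn finite_subset by blast
  have finT: "finite T" using finS T_def by simp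
  have cardT: "card T = p" using finS S0 cardS p2 T_def by simp
  have distT: "s = s'" if "s \<in> T" "s' \<in> T" "s mod p = s' mod p" for s s'
    using dist that T_def by auto
  have inj: "inj_on (\<lambda>x. x mod p) T" by (rule inj_onI) (use distT in auto)
  have img: "(\<lambda>x. x mod p) ` T = {..<p}"
  proof (rule card_subset_eq)
    show "(\<lambda>x. x mod p) ` T \<subseteq> {..<p}" using p2 by auto
    show "card ((\<lambda>x. x mod p) ` T) = card {..<p}" using card_image[OF inj] cardT by simp
  qed simp
  have mm: "x mod n mod p = x mod p" for x using pn by (simp add: mod_mod_cancel)
  have ind: "\<not> circ_adj n S c c'" if "c \<in> C" "c' \<in> C" for c c'
  proof
    assume "circ_adj n S c c'"
    moreover have cn: "c < n" using that C_def by auto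
    ultimately have dS: "(c' + n - c) mod n \<in> S" using adj_nat by simp
    have "p dvd c' + n - c" using that pn unfolding C_def by (auto intro: dvd_diff_nat)
    then have "(c' + n - c) mod n mod p = 0 mod p" using mm by simp
    then have "(c' + n - c) mod n = 0" using distT[of "(c' + n - c) mod n" 0] dS T_def by simp
    then show False using dS S0 by simp
  qed
  have out: "card {c\<in>C. circ_adj n S v c} = 1" if vn: "v < n" "v \<notin> C" for v
  proof -
    have vp: "v mod p \<noteq> 0" using vn C_def by auto
    have vpl: "v mod p < p" using p2 by simp
    let ?r = "(p - v mod p) mod p"
    have r: "?r = p - v mod p" using vp vpl by simp
    have "?r \<in> {..<p}" using p2 by simp
    then have "?r \<in> (\<lambda>x. x mod p) ` T" using img by simp
    then obtain s where s: "s \<in> T" "s mod p = ?r" by (rule imageE) simp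
    have "s \<noteq> 0"
    proof
      assume "s = 0"
      then have "p - v mod p = 0" using s r by simp
      then show False using vpl by simp
    qed
    then have sS: "s \<in> S" using s T_def by simp
    have sn: "s < n" using sS Sn by auto
    define c where "c = (v + s) mod n"
    have "(v + s) mod p = (v mod p + s mod p) mod p" by (simp add: mod_add_eq)
    also have "\<dots> = 0" using s r vpl by simp
    finally have vs0: "(v + s) mod p = 0" .
    have "(v + s) mod n mod p = 0" using mm vs0 by simp
    then have cC: "c \<in> C" using n0 unfolding c_def C_def by auto
    have "(c + n - v) mod n = s" using mod_shift_aux[of v n s c] vn sn n0 unfolding c_def by simp
    then have adjc: "circ_adj n S v c" using adj_nat[OF vn(1)] sS by simp
    have "{c\<in>C. circ_adj n S v c} = {c}"
    proof (intro equalityI subsetI)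
      fix c' assume c': "c' \<in> {c\<in>C. circ_adj n S v c}"
      define s1 where "s1 = (c' + n - v) mod n"
      have s1S: "s1 \<in> S" using c' adj_nat[OF vn(1)] s1_def by simp
      have c'n: "c' < n" using c' C_def by auto
      have s1n: "s1 < n" using s1S Sn by auto
      have vc': "(v + s1) mod n = c'" using mod_shift_aux[of v n s1 c'] vn c'n s1n s1_def by simp
      have "(v + s1) mod p = 0" using mm[of "v + s1"] vc' c' C_def by simp
      then have "(v + s1) mod p = (v + s) mod p" using vs0 by simp
      then have "s1 mod p = s mod p" by (rule add_mod_lcancel)
      moreover have "s1 \<in> T" using s1S T_def by simp
      ultimately have "s1 = s" using distT s(1) by blast
      then show "c' \<in> {c}" using vc' c_def by simp
    qed (use cC adjc in auto)
    then show ?thesis by simp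
  qed
  have "C \<subseteq> {0..<n}" using C_def by auto
  then show ?thesis using ind out unfolding is_perfect_code_def C_def by auto
qed


theorem theorem1p1:
  fixes n p :: nat and S :: "nat set"
  assumes "n > 0" and "prime p" and "odd p"
    and "S \<subseteq> {0..<n}" and "0 \<notin> S" and "inverse_closed n S"
    and "card S = p - 1"
    and "circ_connected n S"
  shows "has_perfect_code n S \<longleftrightarrow>
           (p dvd n \<and> (\<forall>s\<in>S \<union> {0}. \<forall>s'\<in>S \<union> {0}. s \<noteq> s' \<longrightarrow> s mod p \<noteq> s' mod p))"
proof
  assume "has_perfect_code n S"
  then obtain C where "is_perfect_code n S C" unfolding has_perfect_code_def by blast
  then show "p dvd n \<and> (\<forall>s\<in>S \<union> {0}. \<forall>s'\<in>S \<union> {0}. s \<noteq> s' \<longrightarrow> s mod p \<noteq> s' mod p)"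
    using necessity[OF assms] by blast
next
  assume "p dvd n \<and> (\<forall>s\<in>S \<union> {0}. \<forall>s'\<in>S \<union> {0}. s \<noteq> s' \<longrightarrow> s mod p \<noteq> s' mod p)"
  then show "has_perfect_code n S"
    using sufficiency[OF assms(1,2,4,5,7)] unfolding has_perfect_code_def by blast
qed

end
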